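(* Let $m\ge d\ge1$, $\lambda=d/m$, and let $p,q$ be polynomials of degree $d$ with nonnegative real roots, with bivariate extensions $p(x,y)=y^{m-d}p(xy)$, $q(x,y)=y^{m-d}q(xy)$. Then \[ [p\boxplus_{d,\lambda}q](x,y)=\frac{(m-d)!}{d!\,m!}\sum_{k=0}^d(\partial_x\partial_y)^{d-k}p(x,y)\cdot\big[(\partial_x\partial_y)^kq\big](0,1), \] and \[ (p\boxplus_{d,\lambda}q)(x)=\frac{(m-d)!}{d!\,m!}\sum_{k=0}^d\big[(\partial_x\partial_y)^{d-k}p\big](x,1)\cdot\big[(\partial_x\partial_y)^kq\big](0,1). \]
   Context: For $p=\sum_{i=0}^d(-1)^ia_ix^{d-i}$, $q=\sum_{i=0}^d(-1)^ib_ix^{d-i}$: $(p\boxplus_{d,\lambda}q)(x)=\sum_{k=0}^dx^{d-k}(-1)^k\sum_{i+j=k}\frac{(d-i)!(d-j)!}{d!(d-k)!}\frac{(m-i)!(m-j)!}{m!(m-k)!}a_ib_j$, and $[p\boxplus_{d,\lambda}q](x,y):=y^{m-d}(p\boxplus_{d,\lambda}q)(xy)$. *)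

theory Defs
  imports "HOL-Analysis.Analysis" "HOL-Computational_Algebra.Polynomial"
begin

text \<open>Coefficients in the convention p = sum_i (-1)^i a_i x^(d-i).\<close>
definition sgn_coeff :: "nat \<Rightarrow> real poly \<Rightarrow> nat \<Rightarrow> real" where
  "sgn_coeff d p i = (-1) ^ i * coeff p (d - i)"

text \<open>The finite free convolution with parameters d and m (lambda = d/m).\<close>
definition box_conv :: "nat \<Rightarrow> nat \<Rightarrow> real poly \<Rightarrow> real poly \<Rightarrow> real poly" where
  "box_conv d m p q =
     (\<Sum>k\<le>d. monom ((-1) ^ k *
        (\<Sum>i\<le>k. (fact (d - i) * fact (d - (k - i))) / (fact d * fact (d - k))
                 * ((fact (m - i) * fact (m - (k - i))) / (fact m * fact (m - k)))
                 * sgn_coeff d p i * sgn_coeff d q (k - i))) (d - k))"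

definition biv :: "nat \<Rightarrow> nat \<Rightarrow> real poly \<Rightarrow> real \<Rightarrow> real \<Rightarrow> real" where
  "biv d m f = (\<lambda>x y. y ^ (m - d) * poly f (x * y))"

definition DxDy :: "(real \<Rightarrow> real \<Rightarrow> real) \<Rightarrow> real \<Rightarrow> real \<Rightarrow> real" where
  "DxDy F = (\<lambda>x y. deriv (\<lambda>s. deriv (\<lambda>t. F s t) y) x)"

definition nonneg_real_rooted :: "real poly \<Rightarrow> bool" where
  "nonneg_real_rooted p \<longleftrightarrow>
     (\<forall>z::complex. poly (map_poly complex_of_real p) z = 0 \<longrightarrow> Im z = 0 \<and> Re z \<ge> 0)"

end

theory Submission imports Defs begin
definition S :: "nat \<Rightarrow> nat \<Rightarrow> (nat \<Rightarrow> real) \<Rightarrow> real \<Rightarrow> real \<Rightarrow> real" where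
  "S N e c = (\<lambda>x y. \<Sum>j\<le>N. c j * x^j * y^(j+e))"

lemma DxDy_S:
  assumes "\<forall>j>N. c j = 0"
  shows "DxDy (S N e c) = S N e (\<lambda>j. c (Suc j) * real (Suc j) * real (Suc j + e))"
proof (intro ext)
  fix x y :: real
  have i: "deriv (\<lambda>t. S N e c s t) y = (\<Sum>j\<le>N. c j * s^j * (real (j+e) * y^(j+e-1)))" for s
    unfolding S_def
    by (rule DERIV_imp_deriv) (auto intro!: derivative_eq_intros simp: mult_ac)
  have o: "deriv (\<lambda>s. \<Sum>j\<le>N. c j * s^j * (real (j+e) * y^(j+e-1))) x
      = (\<Sum>j\<le>N. c j * (real j * x^(j-1)) * (real (j+e) * y^(j+e-1)))"
    by (rule DERIV_imp_deriv) (auto intro!: derivative_eq_intros simp: mult_ac)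
  define h where "h j = c j * (real j * x^(j-1)) * (real (j+e) * y^(j+e-1))" for j
  have "(\<Sum>j\<le>Suc N. h j) = h 0 + (\<Sum>j\<le>N. h (Suc j))" by (rule sum.atMost_Suc_shift)
  moreover have "(\<Sum>j\<le>Suc N. h j) = (\<Sum>j\<le>N. h j)" using assms by (simp add: h_def)
  moreover have "h 0 = 0" by (simp add: h_def)
  ultimately have "(\<Sum>j\<le>N. h j) = (\<Sum>j\<le>N. h (Suc j))" by simp
  then show "DxDy (S N e c) x y = S N e (\<lambda>j. c (Suc j) * real (Suc j) * real (Suc j + e)) x y"
    unfolding DxDy_def i o h_def[symmetric]
    by (simp add: S_def h_def algebra_simps)
qed

definition G :: "nat \<Rightarrow> nat \<Rightarrow> nat \<Rightarrow> real" where
  "G e r j = (fact (j+r) / fact j) * (fact (j+r+e) / fact (j+e))"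

lemma DxDy_pow_S:
  assumes "\<forall>j>N. c j = 0"
  shows "(DxDy^^r) (S N e c) = S N e (\<lambda>j. c (j+r) * G e r j)"
proof (induction r)
  case 0
  then show ?case by (simp add: G_def)
next
  case (Suc r)
  have z: "\<forall>j>N. c (j+r) * G e r j = 0" using assms by auto
  have "(DxDy^^Suc r) (S N e c) = DxDy (S N e (\<lambda>j. c (j+r) * G e r j))" using Suc by simp
  also have "\<dots> = S N e (\<lambda>j. c (Suc j + r) * G e r (Suc j) * real (Suc j) * real (Suc j + e))"
    by (rule DxDy_S[OF z])
  also have "(\<lambda>j. c (Suc j + r) * G e r (Suc j) * real (Suc j) * real (Suc j + e)) = (\<lambda>j. c (j + Suc r) * G e (Suc r) j)"
  proof
    fix j
    have "G e r (Suc j) * real (Suc j) * real (Suc j + e) = G e (Suc r) j"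
      unfolding G_def
      by (simp add: field_simps del: of_nat_Suc)
    then show "c (Suc j + r) * G e r (Suc j) * real (Suc j) * real (Suc j + e) = c (j + Suc r) * G e (Suc r) j"
      by (simp add: mult.assoc)
  qed
  finally show ?case .
qed

lemma biv_S:
  assumes "degree f \<le> d"
  shows "biv d m f = S d (m-d) (coeff f)"
proof (intro ext)
  fix x y :: real
  have "poly f (x*y) = poly (\<Sum>i\<le>d. monom (coeff f i) i) (x*y)"
    using poly_as_sum_of_monoms'[OF assms] by simp
  also have "\<dots> = (\<Sum>i\<le>d. coeff f i * (x*y)^i)" by (simp add: poly_sum poly_monom)
  finally show "biv d m f x y = S d (m-d) (coeff f) x y"
    unfolding biv_def S_def
    by (simp add: sum_distrib_left power_mult_distrib power_add mult_ac)
qed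

lemma S_01: "S N e c 0 1 = c 0"
proof -
  have "(\<Sum>j\<le>N. c j * (0::real)^j * 1^(j+e)) = (\<Sum>j\<le>N. if j = 0 then c 0 else 0)"
    by (rule sum.cong) (auto simp: power_0_left)
  then show ?thesis by (simp add: S_def)
qed


lemma coeff_box:
  assumes "j \<le> d"
  shows "coeff (box_conv d m p q) j = (-1) ^ (d-j) *
        (\<Sum>i\<le>d-j. (fact (d - i) * fact (d - ((d-j) - i))) / (fact d * fact (d - (d-j)))
                 * ((fact (m - i) * fact (m - ((d-j) - i))) / (fact m * fact (m - (d-j))))
                 * sgn_coeff d p i * sgn_coeff d q ((d-j) - i))"
proof -
  let ?B = "\<lambda>k. (-1) ^ k *
        (\<Sum>i\<le>k. (fact (d - i) * fact (d - (k - i))) / (fact d * fact (d - k))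
                 * ((fact (m - i) * fact (m - (k - i))) / (fact m * fact (m - k)))
                 * sgn_coeff d p i * sgn_coeff d q (k - i)) :: real"
  have "coeff (box_conv d m p q) j = (\<Sum>k\<le>d. if k = d - j then ?B k else 0)"
    unfolding box_conv_def coeff_sum coeff_monom
    by (rule sum.cong) (use assms in auto)
  also have "\<dots> = ?B (d-j)" by simp
  finally show ?thesis .
qed

lemma box_deg: "degree (box_conv d m p q) \<le> d"
  unfolding box_conv_def
  by (rule degree_sum_le) (auto intro: order.trans[OF degree_monom_le])


lemma term_eq:
  fixes p q :: "real poly"
  shows "(-1) ^ (i+r) *
        ((fact (j+i+r - i) * fact (j+i+r - ((i+r) - i))) / (fact (j+i+r) * fact (j+i+r - (i+r)))
                 * ((fact (j+i+r+e - i) * fact (j+i+r+e - ((i+r) - i))) / (fact (j+i+r+e) * fact (j+i+r+e - (i+r))))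
                 * sgn_coeff (j+i+r) p i * sgn_coeff (j+i+r) q ((i+r) - i))
   = fact e / (fact (j+i+r) * fact (j+i+r+e)) *
     (coeff p (j + (j+i+r - (i+j))) * G e (j+i+r - (i+j)) j * (coeff q (i+j) * G e (i+j) 0))"
proof -
  have s: "(-1::real) ^ (i+r) * (-1) ^ i * (-1) ^ r = 1"
  proof -
    have "(-1::real) ^ (i+r) * (-1) ^ (i+r) = 1" by (simp flip: power_mult_distrib)
    then show ?thesis by (simp add: power_add mult_ac)
  qed
  have a: "j+i+r - i = j + r" "j+i+r - r = j + i" "j+i+r+e - i = j+r+e" "j+i+r+e - r = j+i+e"
    "j+i+r - (i+r) = j" "j+i+r+e - (i+r) = j+e" "j+i+r - (i+j) = r" "j+i+r - (i+r-i) = j+i"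
    "j+i+r+e - (i+r-i) = j+i+e" by auto
  show ?thesis
    unfolding a sgn_coeff_def G_def
    using s
    apply (simp add: field_simps)
    done
qed
lemma term_eq2:
  fixes p q :: "real poly"
  assumes dr: "d = j+i+r" and me: "m = d+e"
  shows "(-1) ^ (d-j) *
        (fact (d - i) * fact (d - ((d-j) - i)) / (fact d * fact (d - (d-j)))
                 * ((fact (m - i) * fact (m - ((d-j) - i))) / (fact m * fact (m - (d-j))))
                 * sgn_coeff d p i * sgn_coeff d q ((d-j) - i)) =
     fact e / (fact d * fact m) * (coeff p (j + (d-(i+j))) * G e (d-(i+j)) j * (coeff q (i+j) * G e (i+j) 0))"
proof -
  have a: "d - j = i + r" "m - i = j+i+r+e - i" "m - (i+r-i) = j+i+r+e - (i+r-i)" "m = j+i+r+e" "m - (i+r) = j+i+r+e - (i+r)"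
    using dr me by auto
  show ?thesis unfolding a unfolding dr by (rule term_eq)
qed

theorem mainTheorem13:
  fixes d m :: nat and p q :: "real poly"
  assumes "1 \<le> d" and "d \<le> m"
    and "degree p = d" and "degree q = d"
    and "nonneg_real_rooted p" and "nonneg_real_rooted q"
  shows "(\<forall>x y. biv d m (box_conv d m p q) x y =
            fact (m - d) / (fact d * fact m) *
            (\<Sum>k\<le>d. (DxDy ^^ (d - k)) (biv d m p) x y * (DxDy ^^ k) (biv d m q) 0 1))
       \<and> (\<forall>x. poly (box_conv d m p q) x =
            fact (m - d) / (fact d * fact m) *
            (\<Sum>k\<le>d. (DxDy ^^ (d - k)) (biv d m p) x 1 * (DxDy ^^ k) (biv d m q) 0 1))"
proof -
  define e where "e = m - d"
  have me: "m = d + e" using assms(2) e_def by simp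
  define C where "C = fact e / (fact d * fact m :: real)"
  have zp: "\<forall>j>d. coeff p j = 0" using assms(3) by (simp add: coeff_eq_0)
  have zq: "\<forall>j>d. coeff q j = 0" using assms(4) by (simp add: coeff_eq_0)
  have bp: "biv d m p = S d e (coeff p)" using biv_S[of p d m] assms(3) e_def by simp
  have bq: "biv d m q = S d e (coeff q)" using biv_S[of q d m] assms(4) e_def by simp
  have bb: "biv d m (box_conv d m p q) = S d e (coeff (box_conv d m p q))"
    using biv_S[OF box_deg] e_def by simp
  have pp: "(DxDy ^^ r) (biv d m p) = S d e (\<lambda>j. coeff p (j+r) * G e r j)" for r
    unfolding bp by (rule DxDy_pow_S[OF zp])
  have pq: "(DxDy ^^ r) (biv d m q) 0 1 = coeff q r * G e r 0" for r
    unfolding bq DxDy_pow_S[OF zq] S_01 by simp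
  have key: "coeff (box_conv d m p q) j =
       C * (\<Sum>k\<le>d. coeff p (j + (d-k)) * G e (d-k) j * (coeff q k * G e k 0))"
    if jd: "j \<le> d" for j
  proof -
    let ?T = "\<lambda>k. coeff p (j + (d-k)) * G e (d-k) j * (coeff q k * G e k 0)"
    have "(\<Sum>k\<le>d. ?T k) = (\<Sum>k\<in>{j..d}. ?T k)"
      by (rule sum.mono_neutral_right) (use zp in auto)
    also have "\<dots> = (\<Sum>i\<in>{0..d-j}. ?T (i+j))"
      using sum.shift_bounds_cl_nat_ivl[of ?T 0 j "d-j"] jd by simp
    finally have R: "(\<Sum>k\<le>d. ?T k) = (\<Sum>i\<in>{0..d-j}. ?T (i+j))" .
    have L: "coeff (box_conv d m p q) j = (\<Sum>i\<in>{0..d-j}. C * ?T (i+j))"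
      unfolding coeff_box[OF jd] sum_distrib_left atMost_atLeast0
    proof (rule sum.cong[OF refl])
      fix i assume "i \<in> {0..d-j}"
      then have "j + i \<le> d" using jd by simp
      define r where "r = d - j - i"
      have dr: "d = j+i+r" using \<open>j + i \<le> d\<close> r_def by simp
      show "(-1) ^ (d-j) *
        (fact (d - i) * fact (d - ((d-j) - i)) / (fact d * fact (d - (d-j)))
                 * ((fact (m - i) * fact (m - ((d-j) - i))) / (fact m * fact (m - (d-j))))
                 * sgn_coeff d p i * sgn_coeff d q ((d-j) - i)) = C * ?T (i+j)"
        unfolding C_def by (rule term_eq2[OF dr me])
    qed
    show ?thesis using L R by (simp add: sum_distrib_left)
  qed
  have main: "biv d m (box_conv d m p q) x y =
            fact (m - d) / (fact d * fact m) *
            (\<Sum>k\<le>d. (DxDy ^^ (d - k)) (biv d m p) x y * (DxDy ^^ k) (biv d m q) 0 1)" for x y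
  proof -
    have "(\<Sum>k\<le>d. (DxDy ^^ (d - k)) (biv d m p) x y * (DxDy ^^ k) (biv d m q) 0 1)
       = (\<Sum>k\<le>d. \<Sum>j\<le>d. coeff p (j + (d-k)) * G e (d-k) j * (coeff q k * G e k 0) * x^j * y^(j+e))"
      unfolding pp pq S_def sum_distrib_right by (simp add: mult_ac)
    also have "\<dots> = (\<Sum>j\<le>d. \<Sum>k\<le>d. coeff p (j + (d-k)) * G e (d-k) j * (coeff q k * G e k 0) * x^j * y^(j+e))"
      by (rule sum.swap)
    finally have F: "(\<Sum>k\<le>d. (DxDy ^^ (d - k)) (biv d m p) x y * (DxDy ^^ k) (biv d m q) 0 1)
       = (\<Sum>j\<le>d. \<Sum>k\<le>d. coeff p (j + (d-k)) * G e (d-k) j * (coeff q k * G e k 0) * x^j * y^(j+e))" .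
    have "C * (\<Sum>k\<le>d. (DxDy ^^ (d - k)) (biv d m p) x y * (DxDy ^^ k) (biv d m q) 0 1)
       = C * (\<Sum>j\<le>d. \<Sum>k\<le>d. coeff p (j + (d-k)) * G e (d-k) j * (coeff q k * G e k 0) * x^j * y^(j+e))"
      unfolding F ..
    also have "\<dots> = (\<Sum>j\<le>d. C * (\<Sum>k\<le>d. coeff p (j + (d-k)) * G e (d-k) j * (coeff q k * G e k 0)) * x^j * y^(j+e))"
      by (simp add: sum_distrib_left sum_distrib_right mult.assoc)
    also have "\<dots> = S d e (coeff (box_conv d m p q)) x y"
      unfolding S_def by (rule sum.cong[OF refl]) (simp add: key)
    finally show ?thesis unfolding bb C_def e_def by simp
  qed
  show ?thesis
  proof (intro conjI allI)
    fix x y show "biv d m (box_conv d m p q) x y =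
            fact (m - d) / (fact d * fact m) *
            (\<Sum>k\<le>d. (DxDy ^^ (d - k)) (biv d m p) x y * (DxDy ^^ k) (biv d m q) 0 1)"
      by (rule main)
  next
    fix x
    have "poly (box_conv d m p q) x = biv d m (box_conv d m p q) x 1" by (simp add: biv_def)
    then show "poly (box_conv d m p q) x =
            fact (m - d) / (fact d * fact m) *
            (\<Sum>k\<le>d. (DxDy ^^ (d - k)) (biv d m p) x 1 * (DxDy ^^ k) (biv d m q) 0 1)"
      using main[of x 1] by simp
  qed
qed
end
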